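(* Let $p\ge 1$ be an integer and let $0<u\le v$ be real numbers with $uv=1$. Let $\mathcal{C}=\{A\in\mathbb{S}_{++}^p : uI_p\preceq A\preceq vI_p\}$. Then for every $\Omega_r\in\mathcal{C}$, \[ \mathcal{N}_{\mathcal{C}}(\Omega_r) = -\mathcal{N}_{\mathcal{C}}(\Omega_r^{-1}), \] where for $A\in\mathcal{C}$ the normal cone is $\mathcal{N}_{\mathcal{C}}(A)=\{B\in\mathbb{S}^p : \operatorname{tr}(B^T(Z-A))\le 0 \text{ for all } Z\in\mathcal{C}\}$.
   Context: $\mathbb{S}^p$ denotes the set of real symmetric $p\times p$ matrices, $\mathbb{S}_{++}^p$ the set of real symmetric positive definite $p\times p$ matrices, and $\preceq$ the Loewner order ($A\preceq B$ iff $B-A$ is positive semidefinite). For a set $S$ of matrices, $-S=\{-B : B\in S\}$. Note that $\Omega_r\in\mathcal{C}$ implies $\Omega_r^{-1}\in\mathcal{C}$ since $uv=1$. *)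

theory Defs
  imports "HOL-Analysis.Analysis"
begin

(* Real symmetric matrices S^p, with p = CARD('n) *)
definition sym_mat :: "real^'n^'n \<Rightarrow> bool" where
  "sym_mat A \<longleftrightarrow> transpose A = A"

definition psd :: "real^'n^'n \<Rightarrow> bool" where
  "psd A \<longleftrightarrow> sym_mat A \<and> (\<forall>x. 0 \<le> x \<bullet> (A *v x))"

definition pd :: "real^'n^'n \<Rightarrow> bool" where
  "pd A \<longleftrightarrow> sym_mat A \<and> (\<forall>x. x \<noteq> 0 \<longrightarrow> 0 < x \<bullet> (A *v x))"

definition loewner_le :: "real^'n^'n \<Rightarrow> real^'n^'n \<Rightarrow> bool" where
  "loewner_le A B \<longleftrightarrow> psd (B - A)"

definition Cset :: "real \<Rightarrow> real \<Rightarrow> (real^'n^'n) set" where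
  "Cset u v = {A. pd A \<and> loewner_le (u *\<^sub>R mat 1) A \<and> loewner_le A (v *\<^sub>R mat 1)}"

definition normal_cone :: "(real^'n^'n) set \<Rightarrow> real^'n^'n \<Rightarrow> (real^'n^'n) set" where
  "normal_cone C A = {B. sym_mat B \<and> (\<forall>Z\<in>C. trace (transpose B ** (Z - A)) \<le> 0)}"

end

theory Submission
  imports Defs
begin

lemma vec_L1a:
  fixes f :: "'a::real_inner \<Rightarrow> 'a"
  assumes lin: "linear f" and sym: "\<And>x y. f x \<bullet> y = x \<bullet> f y"
    and lo: "\<And>x. u * (x\<bullet>x) \<le> x \<bullet> f x" and hi: "\<And>x. x \<bullet> f x \<le> v * (x\<bullet>x)"
    and u: "0 < u" and uv: "u * v = 1"
  shows "u * (f y \<bullet> f y) \<le> f y \<bullet> y"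
proof -
  define w where "w = f y"
  have s1: "y \<bullet> f w = w \<bullet> w" using sym[of y w] by (simp add: w_def)
  have "0 \<le> u * ((v *\<^sub>R y - w)\<bullet>(v *\<^sub>R y - w))" using u by simp
  also have "\<dots> \<le> (v *\<^sub>R y - w) \<bullet> f (v *\<^sub>R y - w)" by (rule lo)
  also have "\<dots> = v * v * (y\<bullet>w) - 2 * v * (w\<bullet>w) + w \<bullet> f w"
    by (simp add: linear_diff[OF lin] linear_cmul[OF lin] inner_diff_left inner_diff_right
        s1 w_def[symmetric] inner_commute[of w y] algebra_simps)
  finally have a: "0 \<le> v * v * (y\<bullet>w) - 2 * v * (w\<bullet>w) + w \<bullet> f w" .
  have b: "w \<bullet> f w \<le> v * (w\<bullet>w)" by (rule hi)
  have "0 \<le> v * (v * (y\<bullet>w) - w\<bullet>w)" using a b by (simp add: algebra_simps)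
  moreover have "v > 0" using u uv by (metis mult_pos_pos zero_less_mult_pos less_numeral_extra(1))
  ultimately have "0 \<le> v * (y\<bullet>w) - w\<bullet>w" by (simp add: zero_le_mult_iff)
  then have "0 \<le> u * (v * (y\<bullet>w) - w\<bullet>w)" using u by simp
  moreover have "u * (v * (y\<bullet>w) - w\<bullet>w) = y\<bullet>w - u * (w\<bullet>w)" using uv by algebra
  ultimately show ?thesis by (simp add: w_def inner_commute)
qed

lemma vec_L1b:
  fixes f :: "'a::real_inner \<Rightarrow> 'a"
  assumes lin: "linear f" and sym: "\<And>x y. f x \<bullet> y = x \<bullet> f y"
    and lo: "\<And>x. u * (x\<bullet>x) \<le> x \<bullet> f x"
    and u: "0 < u" and uv: "u * v = 1"
  shows "f y \<bullet> y \<le> v * (f y \<bullet> f y)"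
proof -
  define w where "w = f y"
  have "0 \<le> (w - u *\<^sub>R y)\<bullet>(w - u *\<^sub>R y) + u * (y \<bullet> f y - u * (y\<bullet>y))"
    using lo[of y] u by simp
  also have "\<dots> = w\<bullet>w - u * (y\<bullet>w)"
    by (simp add: inner_diff_left inner_diff_right w_def[symmetric] inner_commute[of w y] algebra_simps power2_eq_square)
  finally have "0 \<le> v * (w\<bullet>w - u * (y\<bullet>w))" using u uv
    by (metis mult_nonneg_nonneg mult_pos_pos order_less_le zero_less_mult_pos zero_less_one)
  moreover have "v * (w\<bullet>w - u * (y\<bullet>w)) = v * (w\<bullet>w) - y\<bullet>w" using uv by algebra
  ultimately show ?thesis by (simp add: w_def inner_commute)
qed

lemma vec_L2:
  fixes f :: "'a::real_inner \<Rightarrow> 'a"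
  assumes lin: "linear f" and sym: "\<And>x y. f x \<bullet> y = x \<bullet> f y"
    and lo: "\<And>x. u * (x\<bullet>x) \<le> x \<bullet> f x" and hi: "\<And>x. x \<bullet> f x \<le> v * (x\<bullet>x)"
    and u: "0 < u" and uv: "u * v = 1" and ltv: "u < v"
  shows "0 \<le> (u+v) * (f y \<bullet> f y) - f y \<bullet> f (f y) - f y \<bullet> y"
proof -
  define w where "w = f y"
  have s1: "y \<bullet> f w = w \<bullet> w" using sym[of y w] by (simp add: w_def)
  define p where "p = v *\<^sub>R y - w"
  define q where "q = w - u *\<^sub>R y"
  have E1: "0 \<le> p \<bullet> f p - u * (p\<bullet>p)" using lo[of p] by simp
  have E2: "0 \<le> v * (q\<bullet>q) - q \<bullet> f q" using hi[of q] by simp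
  have e1: "p \<bullet> f p - u * (p\<bullet>p) = v * v * (y\<bullet>w) - 2 * v * (w\<bullet>w) + w \<bullet> f w - u * (v * v * (y\<bullet>y) - 2 * v * (y\<bullet>w) + w\<bullet>w)"
    by (simp add: p_def linear_diff[OF lin] linear_cmul[OF lin] inner_diff_left inner_diff_right
        s1 w_def[symmetric] inner_commute[of w y] algebra_simps)
  have e2: "v * (q\<bullet>q) - q \<bullet> f q = v * (w\<bullet>w - 2 * u * (y\<bullet>w) + u * u * (y\<bullet>y)) - (w \<bullet> f w - 2 * u * (w\<bullet>w) + u * u * (y\<bullet>w))"
    by (simp add: q_def linear_diff[OF lin] linear_cmul[OF lin] inner_diff_left inner_diff_right
        s1 w_def[symmetric] inner_commute[of w y] algebra_simps)
  have key: "(v-u) * ((u+v) * (w\<bullet>w) - w \<bullet> f w - w \<bullet> y) = u * (p \<bullet> f p - u * (p\<bullet>p)) + v * (v * (q\<bullet>q) - q \<bullet> f q)"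
    unfolding e1 e2 using uv by (simp add: inner_commute[of w y]) algebra
  have "0 \<le> (v-u) * ((u+v) * (w\<bullet>w) - w \<bullet> f w - w \<bullet> y)"
    unfolding key using E1 E2 u ltv by simp
  then show ?thesis using ltv by (simp add: zero_le_mult_iff w_def)
qed

(* Z - u psd, with s = u/(v-u) *)
lemma vec_L3:
  fixes f :: "'a::real_inner \<Rightarrow> 'a"
  assumes lin: "linear f" and sym: "\<And>x y. f x \<bullet> y = x \<bullet> f y"
    and lo: "\<And>x. u * (x\<bullet>x) \<le> x \<bullet> f x"
    and u: "0 < u" and uv: "u * v = 1" and ltv: "u < v"
  shows "0 \<le> (v-u) * (f y \<bullet> f (f y) - u * (f y \<bullet> f y)) - u * ((u+v) * (f y \<bullet> f y) - f y \<bullet> f (f y) - f y \<bullet> y)"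
proof -
  define w where "w = f y"
  have s1: "y \<bullet> f w = w \<bullet> w" using sym[of y w] by (simp add: w_def)
  define q where "q = w - u *\<^sub>R y"
  have E: "0 \<le> q \<bullet> f q - u * (q\<bullet>q)" using lo[of q] by simp
  have E0: "0 \<le> u * (q \<bullet> q)" using u by simp
  have e: "q \<bullet> f q = w \<bullet> f w - 2 * u * (w\<bullet>w) + u * u * (y\<bullet>w)"
    by (simp add: q_def linear_diff[OF lin] linear_cmul[OF lin] inner_diff_left inner_diff_right
        s1 w_def[symmetric] inner_commute[of w y] algebra_simps)
  have key: "(v-u) * (w \<bullet> f w - u * (w \<bullet> w)) - u * ((u+v) * (w \<bullet> w) - w \<bullet> f w - w \<bullet> y) = v * (q \<bullet> f q)"
    unfolding e using uv by (simp add: inner_commute[of w y]) algebra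
  have "0 \<le> q \<bullet> f q" using E E0 by linarith
  then have "0 \<le> v * (q \<bullet> f q)" using u ltv by simp
  then show ?thesis using key by (simp add: w_def)
qed


lemma sym_inner:
  assumes "sym_mat A" shows "(A *v x) \<bullet> y = x \<bullet> (A *v y)"
proof -
  have "(A *v x) \<bullet> y = (transpose A *v x) \<bullet> y" using assms by (simp add: sym_mat_def)
  also have "\<dots> = x \<bullet> (A *v y)" by (simp add: dot_lmul_matrix)
  finally show ?thesis .
qed

lemma scaleR_mat_vec: "((c::real) *\<^sub>R (X::real^'m^'n)) *v x = c *\<^sub>R (X *v x)"
  by (rule scaleR_matrix_vector_assoc[symmetric])

lemma transpose_diff: "transpose (A - B) = transpose A - (transpose B :: real^'n^'m)"
  by (simp add: transpose_def vec_eq_iff)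
lemma transpose_add: "transpose (A + B) = transpose A + (transpose B :: real^'n^'m)"
  by (simp add: transpose_def vec_eq_iff)
lemma transpose_neg: "transpose (- A) = - (transpose A :: real^'n^'m)"
  by (simp add: transpose_def vec_eq_iff)

lemma sym_diff: "sym_mat A \<Longrightarrow> sym_mat B \<Longrightarrow> sym_mat (A - B)"
  by (simp add: sym_mat_def transpose_diff)
lemma sym_scale: "sym_mat A \<Longrightarrow> sym_mat (c *\<^sub>R A)"
  by (simp add: sym_mat_def transpose_scalar)
lemma sym_one: "sym_mat (mat 1)"
  by (simp add: sym_mat_def)
lemma sym_neg: "sym_mat A \<Longrightarrow> sym_mat (- A)"
  by (simp add: sym_mat_def transpose_neg)

lemma cset_iff:
  "A \<in> Cset u v \<longleftrightarrow> sym_mat A \<and> (\<forall>x. x \<noteq> 0 \<longrightarrow> 0 < x \<bullet> (A *v x))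
     \<and> (\<forall>x. u * (x \<bullet> x) \<le> x \<bullet> (A *v x)) \<and> (\<forall>x. x \<bullet> (A *v x) \<le> v * (x \<bullet> x))"
proof -
  have s1: "sym_mat A \<Longrightarrow> sym_mat (A - u *\<^sub>R mat 1)" by (intro sym_diff sym_scale sym_one)
  have s2: "sym_mat A \<Longrightarrow> sym_mat (v *\<^sub>R mat 1 - A)" by (intro sym_diff sym_scale sym_one)
  show ?thesis
    unfolding Cset_def pd_def loewner_le_def psd_def
    using s1 s2
    by (auto simp: matrix_vector_mult_diff_rdistrib scaleR_mat_vec inner_diff_right)
qed

lemma pd_inv:
  fixes A :: "real^'n^'n"
  assumes "\<forall>x. x \<noteq> 0 \<longrightarrow> 0 < x \<bullet> (A *v x)"
  shows "A ** matrix_inv A = mat 1 \<and> matrix_inv A ** A = mat 1"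
proof -
  have "\<forall>x. A *v x = 0 \<longrightarrow> x = 0" using assms by (metis inner_zero_right less_irrefl)
  then have "\<exists>B. B ** A = mat 1" by (simp add: matrix_left_invertible_ker)
  then have "invertible A" by (simp add: invertible_left_inverse)
  then show ?thesis unfolding invertible_def matrix_inv_def by (rule someI_ex)
qed

lemma inv_unique:
  fixes A K X :: "real^'n^'n"
  assumes "A ** K = mat 1" "K ** X = mat 1" shows "X = A"
proof -
  have "X = (A ** K) ** X" using assms by simp
  also have "\<dots> = A ** (K ** X)" by (simp add: matrix_mul_assoc)
  finally show ?thesis using assms by simp
qed

lemma inv_facts:
  fixes A :: "real^'n^'n"
  assumes "A \<in> Cset u v"
  shows "A ** matrix_inv A = mat 1" "matrix_inv A ** A = mat 1"
    "sym_mat (matrix_inv A)" "matrix_inv (matrix_inv A) = A"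
proof -
  have sA: "sym_mat A" and pdA: "\<forall>x. x \<noteq> 0 \<longrightarrow> 0 < x \<bullet> (A *v x)" using assms cset_iff by blast+
  define K where "K = matrix_inv A"
  have AK: "A ** K = mat 1" and KA: "K ** A = mat 1" using pd_inv[OF pdA] K_def by auto
  show "A ** matrix_inv A = mat 1" "matrix_inv A ** A = mat 1" using AK KA K_def by auto
  have "transpose K ** A = mat 1"
    using arg_cong[OF AK, of transpose] sA by (simp add: matrix_transpose_mul sym_mat_def)
  then have "transpose K = K" using inv_unique[OF _ AK] by metis
  then show "sym_mat (matrix_inv A)" by (simp add: sym_mat_def K_def)
  have "\<forall>x. x \<noteq> 0 \<longrightarrow> 0 < x \<bullet> (K *v x)"
  proof (intro allI impI)
    fix x :: "real^'n" assume x: "x \<noteq> 0"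
    define y where "y = K *v x"
    have xy: "x = A *v y" using AK by (simp add: y_def matrix_vector_mul_assoc)
    have "y \<noteq> 0" using x xy by (metis matrix_vector_mult_0_right)
    then have "0 < y \<bullet> (A *v y)" using pdA by blast
    then show "0 < x \<bullet> (K *v x)" unfolding y_def[symmetric] using xy by (simp add: inner_commute)
  qed
  then have "K ** matrix_inv K = mat 1" using pd_inv by blast
  then show "matrix_inv (matrix_inv A) = A" using inv_unique[OF AK \<open>K ** matrix_inv K = mat 1\<close>] K_def by simp
qed

lemma inv_in:
  fixes A :: "real^'n^'n"
  assumes A: "A \<in> Cset u v" and u: "0 < u" and uv: "u * v = 1"
  shows "matrix_inv A \<in> Cset u v"
proof -
  have sA: "sym_mat A" and pdA: "\<forall>x. x \<noteq> 0 \<longrightarrow> 0 < x \<bullet> (A *v x)"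
    and lo: "\<And>x. u * (x \<bullet> x) \<le> x \<bullet> (A *v x)" and hi: "\<And>x. x \<bullet> (A *v x) \<le> v * (x \<bullet> x)"
    using A cset_iff by blast+
  define K where "K = matrix_inv A"
  have AK: "A ** K = mat 1" and KA: "K ** A = mat 1" and sK: "sym_mat K"
    using inv_facts[OF A] K_def by auto
  have lin: "linear ((*v) A)" by simp
  have sym: "\<And>x y. (A *v x) \<bullet> y = x \<bullet> (A *v y)" using sym_inner[OF sA] .
  have rep: "\<And>x. x = A *v (K *v x)" using AK by (simp add: matrix_vector_mul_assoc)
  have "(\<forall>x. x \<noteq> 0 \<longrightarrow> 0 < x \<bullet> (K *v x))
     \<and> (\<forall>x. u * (x \<bullet> x) \<le> x \<bullet> (K *v x)) \<and> (\<forall>x. x \<bullet> (K *v x) \<le> v * (x \<bullet> x))"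
  proof (intro conjI allI impI)
    fix x :: "real^'n" assume x: "x \<noteq> 0"
    define y where "y = K *v x"
    have xy: "x = A *v y" using rep y_def by simp
    have "y \<noteq> 0" using x xy by (metis matrix_vector_mult_0_right)
    then have "0 < y \<bullet> (A *v y)" using pdA by blast
    then show "0 < x \<bullet> (K *v x)" unfolding y_def[symmetric] using xy by (simp add: inner_commute)
  next
    fix x :: "real^'n"
    define y where "y = K *v x"
    have xy: "x = A *v y" using rep y_def by simp
    show "u * (x \<bullet> x) \<le> x \<bullet> (K *v x)"
      unfolding y_def[symmetric] using vec_L1a[OF lin sym lo hi u uv, of y] xy by simp
  next
    fix x :: "real^'n"
    define y where "y = K *v x"
    have xy: "x = A *v y" using rep y_def by simp
    show "x \<bullet> (K *v x) \<le> v * (x \<bullet> x)"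
      unfolding y_def[symmetric] using vec_L1b[OF lin sym lo u uv, of y] xy by simp
  qed
  then show ?thesis using sK cset_iff K_def by blast
qed


lemma refl_in:
  fixes W :: "real^'n^'n"
  assumes W: "W \<in> Cset u v" and u: "0 < u"
  shows "(u+v) *\<^sub>R mat 1 - W \<in> Cset u v"
proof -
  have sW: "sym_mat W" and lo: "\<And>x. u * (x \<bullet> x) \<le> x \<bullet> (W *v x)" and hi: "\<And>x. x \<bullet> (W *v x) \<le> v * (x \<bullet> x)"
    using W cset_iff by blast+
  have q: "\<And>x. x \<bullet> (((u+v) *\<^sub>R mat 1 - W) *v x) = (u+v) * (x \<bullet> x) - x \<bullet> (W *v x)"
    by (simp add: matrix_vector_mult_diff_rdistrib scaleR_mat_vec inner_diff_right)
  have "sym_mat ((u+v) *\<^sub>R mat 1 - W)" by (intro sym_diff sym_scale sym_one sW)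
  moreover have "\<forall>x. x \<noteq> 0 \<longrightarrow> 0 < x \<bullet> (((u+v) *\<^sub>R mat 1 - W) *v x)"
  proof (intro allI impI)
    fix x :: "real^'n" assume "x \<noteq> 0"
    then have "0 < x \<bullet> x" by simp
    then have "0 < u * (x \<bullet> x)" using u by simp
    then show "0 < x \<bullet> (((u+v) *\<^sub>R mat 1 - W) *v x)" unfolding q using hi[of x]
      by (simp add: algebra_simps)
  qed
  moreover have "\<forall>x. u * (x \<bullet> x) \<le> x \<bullet> (((u+v) *\<^sub>R mat 1 - W) *v x)"
    unfolding q using hi by (simp add: algebra_simps)
  moreover have "\<forall>x. x \<bullet> (((u+v) *\<^sub>R mat 1 - W) *v x) \<le> v * (x \<bullet> x)"
    unfolding q using lo by (simp add: algebra_simps)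
  ultimately show ?thesis using cset_iff by blast
qed

lemma step_in:
  fixes A :: "real^'n^'n"
  assumes A: "A \<in> Cset u v" and u: "0 < u" and uv: "u * v = 1" and ltv: "u < v"
  shows "A - (u/(v-u)) *\<^sub>R ((u+v) *\<^sub>R mat 1 - A - matrix_inv A) \<in> Cset u v"
proof -
  have sA: "sym_mat A"
    and lo: "\<And>x. u * (x \<bullet> x) \<le> x \<bullet> (A *v x)" and hi: "\<And>x. x \<bullet> (A *v x) \<le> v * (x \<bullet> x)"
    using A cset_iff by blast+
  define K where "K = matrix_inv A"
  define s where "s = u/(v-u)"
  have s0: "0 < s" using u ltv by (simp add: s_def)
  have AK: "A ** K = mat 1" and sK: "sym_mat K"
    using inv_facts[OF A] K_def by auto
  have lin: "linear ((*v) A)" by simp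
  have sym: "\<And>x y. (A *v x) \<bullet> y = x \<bullet> (A *v y)" using sym_inner[OF sA] .
  have rep: "\<And>x. x = A *v (K *v x)" using AK by (simp add: matrix_vector_mul_assoc)
  define Z where "Z = A - s *\<^sub>R ((u+v) *\<^sub>R mat 1 - A - K)"
  define m where "m = (\<lambda>x. (u+v) * (x \<bullet> x) - x \<bullet> (A *v x) - x \<bullet> (K *v x))"
  have q: "\<And>x. x \<bullet> (Z *v x) = x \<bullet> (A *v x) - s * m x"
    by (simp add: Z_def m_def matrix_vector_mult_diff_rdistrib scaleR_mat_vec inner_diff_right
        algebra_simps)
  have m0: "\<And>x. 0 \<le> m x"
  proof -
    fix x :: "real^'n"
    define y where "y = K *v x"
    have xy: "x = A *v y" using rep y_def by simp
    show "0 \<le> m x" unfolding m_def y_def[symmetric]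
      using vec_L2[OF lin sym lo hi u uv ltv, of y] xy by simp
  qed
  have L: "\<And>x. u * (x \<bullet> x) \<le> x \<bullet> (Z *v x)"
  proof -
    fix x :: "real^'n"
    define y where "y = K *v x"
    have xy: "x = A *v y" using rep y_def by simp
    have "0 \<le> (v-u) * (x \<bullet> (A *v x) - u * (x \<bullet> x)) - u * m x" unfolding m_def y_def[symmetric]
      using vec_L3[OF lin sym lo u uv ltv, of y] xy by simp
    moreover have "(v-u) * (x \<bullet> (A *v x) - u * (x \<bullet> x) - s * m x) = (v-u) * (x \<bullet> (A *v x) - u * (x \<bullet> x)) - ((v-u) * s) * m x"
      by (simp add: right_diff_distrib mult.assoc)
    moreover have "(v-u) * s = u" using ltv by (simp add: s_def)
    ultimately have "0 \<le> (v-u) * (x \<bullet> (A *v x) - u * (x \<bullet> x) - s * m x)" by simp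
    then have "0 \<le> x \<bullet> (A *v x) - u * (x \<bullet> x) - s * m x" using ltv by (simp add: zero_le_mult_iff)
    then show "u * (x \<bullet> x) \<le> x \<bullet> (Z *v x)" unfolding q by simp
  qed
  have H: "\<And>x. x \<bullet> (Z *v x) \<le> v * (x \<bullet> x)"
  proof -
    fix x :: "real^'n"
    have "0 \<le> s * m x" using s0 m0[of x] by simp
    then show "x \<bullet> (Z *v x) \<le> v * (x \<bullet> x)" unfolding q using hi[of x] by linarith
  qed
  have P: "\<forall>x. x \<noteq> 0 \<longrightarrow> 0 < x \<bullet> (Z *v x)"
  proof (intro allI impI)
    fix x :: "real^'n" assume "x \<noteq> 0"
    then have "0 < x \<bullet> x" by simp
    then have "0 < u * (x \<bullet> x)" using u by simp
    then show "0 < x \<bullet> (Z *v x)" using L[of x] by simp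
  qed
  have "sym_mat Z" unfolding Z_def by (intro sym_diff sym_scale sym_one sA sK)
  then have "Z \<in> Cset u v" using P L H cset_iff by blast
  then show ?thesis by (simp add: Z_def K_def s_def)
qed

lemma collapse:
  fixes Z :: "real^'n^'n"
  assumes Z: "Z \<in> Cset u v" and u: "0 < u" and uv: "u * v = 1" and eq: "u = v"
  shows "Z = mat 1"
proof -
  have uu: "u * u = 1" using uv eq by simp
  have u1: "u = 1"
  proof (rule ccontr)
    assume "u \<noteq> 1"
    then consider "u < 1" | "u > 1" by linarith
    then show False
    proof cases
      case 1 then have "u * u < 1 * 1" using u by (intro mult_strict_mono) auto
      then show False using uu by simp
    next
      case 2 then have "1 * 1 < u * u" by (intro mult_strict_mono) auto
      then show False using uu by simp
    qed
  qed
  have sZ: "sym_mat Z"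
    and lo: "\<And>x. u * (x \<bullet> x) \<le> x \<bullet> (Z *v x)" and hi: "\<And>x. x \<bullet> (Z *v x) \<le> v * (x \<bullet> x)"
    using Z cset_iff by blast+
  define S where "S = Z - mat 1"
  have sS: "sym_mat S" unfolding S_def by (intro sym_diff sym_one sZ)
  have z: "\<And>x. x \<bullet> (S *v x) = 0"
  proof -
    fix x :: "real^'n"
    have "x \<bullet> (S *v x) = x \<bullet> (Z *v x) - x \<bullet> x"
      by (simp add: S_def matrix_vector_mult_diff_rdistrib inner_diff_right)
    then show "x \<bullet> (S *v x) = 0" using lo[of x] hi[of x] u1 eq by simp
  qed
  have "\<And>x. S *v x = 0"
  proof -
    fix x :: "real^'n"
    define y where "y = S *v x"
    have "0 = (x + y) \<bullet> (S *v (x + y))" using z by simp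
    also have "\<dots> = x \<bullet> (S *v x) + y \<bullet> (S *v y) + x \<bullet> (S *v y) + y \<bullet> (S *v x)"
      by (simp add: matrix_vector_right_distrib inner_add_left inner_add_right)
    also have "x \<bullet> (S *v y) = y \<bullet> (S *v x)" using sym_inner[OF sS, of x y] by (simp add: inner_commute)
    finally have "0 = 2 * (y \<bullet> y)" using z by (simp add: y_def)
    then show "S *v x = 0" by (simp add: y_def)
  qed
  then have "\<forall>x. Z *v x = mat 1 *v x" by (simp add: S_def matrix_vector_mult_diff_rdistrib)
  then show ?thesis using matrix_eq by blast
qed


lemma mm_diff: "(B::real^'n^'n) ** (X - Y) = B ** X - B ** Y"
  by (simp add: matrix_matrix_mult_def vec_eq_iff sum_subtractf algebra_simps)
lemma mm_neg: "(- (B::real^'n^'n)) ** X = - (B ** X)"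
  by (simp add: matrix_matrix_mult_def vec_eq_iff sum_negf)
lemma trace_scale: "trace ((c::real) *\<^sub>R (X::real^'n^'n)) = c * trace X"
  by (simp add: trace_def sum_distrib_left)
lemma trace_neg: "trace (- (X::real^'n^'n)) = - trace X"
  by (simp add: trace_def sum_negf)
lemma phi_scale: "trace ((B::real^'n^'n) ** ((c::real) *\<^sub>R X)) = c * trace (B ** X)"
  by (simp add: trace_def matrix_matrix_mult_def sum_distrib_left algebra_simps)
lemma phi_diff: "trace ((B::real^'n^'n) ** (X - Y)) = trace (B ** X) - trace (B ** Y)"
  by (simp add: mm_diff trace_sub)

lemma key:
  fixes A B :: "real^'n^'n"
  assumes A: "A \<in> Cset u v" and u: "0 < u" and uv_le: "u \<le> v" and uv: "u * v = 1"
    and B: "B \<in> normal_cone (Cset u v) A"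
  shows "- B \<in> normal_cone (Cset u v) (matrix_inv A)"
proof -
  define K where "K = matrix_inv A"
  have K: "K \<in> Cset u v" using inv_in[OF A u uv] K_def by simp
  have sB: "sym_mat B" and hB: "\<And>Z. Z \<in> Cset u v \<Longrightarrow> trace (transpose B ** (Z - A)) \<le> 0"
    using B unfolding normal_cone_def by auto
  have tB: "transpose B = B" using sB by (simp add: sym_mat_def)
  define phi where "phi = (\<lambda>X. trace (B ** X))"
  have hyp: "\<And>Z. Z \<in> Cset u v \<Longrightarrow> phi Z \<le> phi A"
    using hB by (simp add: tB phi_def phi_diff)
  have main: "\<And>W. W \<in> Cset u v \<Longrightarrow> phi K \<le> phi W"
  proof -
    fix W :: "real^'n^'n" assume W: "W \<in> Cset u v"
    show "phi K \<le> phi W"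
    proof (cases "u = v")
      case True
      then have "W = K" using collapse[OF W u uv] collapse[OF K u uv] by simp
      then show ?thesis by simp
    next
      case False
      then have ltv: "u < v" using uv_le by simp
      define s where "s = u/(v-u)"
      have s0: "0 < s" using u ltv by (simp add: s_def)
      have "A - s *\<^sub>R ((u+v) *\<^sub>R mat 1 - A - K) \<in> Cset u v"
        using step_in[OF A u uv ltv] by (simp add: s_def K_def)
      from hyp[OF this] have "0 \<le> s * ((u+v) * phi (mat 1) - phi A - phi K)"
        by (simp add: phi_def phi_diff phi_scale)
      then have h1: "phi K \<le> (u+v) * phi (mat 1) - phi A" using s0 by (simp add: zero_le_mult_iff)
      from hyp[OF refl_in[OF W u]] have h2: "(u+v) * phi (mat 1) - phi W \<le> phi A"
        by (simp add: phi_def phi_diff phi_scale)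
      show ?thesis using h1 h2 by linarith
    qed
  qed
  have "sym_mat (- B)" by (rule sym_neg[OF sB])
  moreover have "\<forall>W\<in>Cset u v. trace (transpose (- B) ** (W - K)) \<le> 0"
  proof
    fix W :: "real^'n^'n" assume W: "W \<in> Cset u v"
    have "trace (transpose (- B) ** (W - K)) = - (phi W - phi K)"
      by (simp add: transpose_neg tB mm_neg trace_neg phi_def phi_diff)
    then show "trace (transpose (- B) ** (W - K)) \<le> 0" using main[OF W] by simp
  qed
  ultimately show ?thesis unfolding normal_cone_def K_def by simp
qed

theorem lemma1:
  fixes u v :: real and Omega :: "real^'n^'n"
  assumes "0 < u" and "u \<le> v" and "u * v = 1"
    and "Omega \<in> Cset u v"
  shows "normal_cone (Cset u v) Omega = uminus ` normal_cone (Cset u v) (matrix_inv Omega)"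
proof
  show "normal_cone (Cset u v) Omega \<subseteq> uminus ` normal_cone (Cset u v) (matrix_inv Omega)"
  proof
    fix B assume "B \<in> normal_cone (Cset u v) Omega"
    then have "- B \<in> normal_cone (Cset u v) (matrix_inv Omega)" using key assms by blast
    then show "B \<in> uminus ` normal_cone (Cset u v) (matrix_inv Omega)"
      by (metis image_eqI minus_minus)
  qed
next
  show "uminus ` normal_cone (Cset u v) (matrix_inv Omega) \<subseteq> normal_cone (Cset u v) Omega"
  proof
    fix C assume "C \<in> uminus ` normal_cone (Cset u v) (matrix_inv Omega)"
    then obtain B where C: "C = - B" and B: "B \<in> normal_cone (Cset u v) (matrix_inv Omega)" by blast
    have K: "matrix_inv Omega \<in> Cset u v" using inv_in assms by blast
    have "- B \<in> normal_cone (Cset u v) (matrix_inv (matrix_inv Omega))"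
      using key[OF K assms(1-3) B] .
    then show "C \<in> normal_cone (Cset u v) Omega" using C inv_facts(4)[OF assms(4)] by simp
  qed
qed

end
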